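(* Let $C\in\mathbb R^{d\times d}$ satisfy Condition A, let $m\ge1$, and let $D^{(m)}\in F^{(m)}$ have a rank-1 decomposition $D^{(m)}=\sum_{k=1}^s\lambda_kv_k^{\otimes m}$ with $s$ equal to the symmetric rank of $D^{(m)}$, $\lambda_k\in\mathbb R$, $v_k\in\mathbb R^d$. Let $D^{(m)}(t)$, $t\ge0$, be the solution of $$\dot D^{(m)}_\alpha=-\sum_{j,l=1}^d\alpha_jC_{jl}\,D^{(m)}_{(\alpha^{(j-)})^{(l+)}},\qquad\alpha\in S^{(m)},$$ with $D^{(m)}(0)=D^{(m)}$. Then $$D^{(m)}(t)=\sum_{k=1}^s\lambda_k[v_k(t)]^{\otimes m},\qquad t>0,$$ where $v_k(t)\in\mathbb R^d$ solves $\dot v_k=-Cv_k$, $v_k(0)=v_k$. Moreover, $D^{(m)}(t)$ has symmetric rank $s$ for all $t>0$.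
   Context: $C_S=\frac12(C+C^T)$; Condition A: $C_S$ positive semi-definite and no non-trivial $C^T$-invariant subspace of $\ker C_S$. $F^{(m)}$ is the space of symmetric $m$-tensors over $\mathbb R^d$ (arrays $(A_{i_1\dots i_m})_{i_r\in\{1,\dots,d\}}$ invariant under permutations of indices). $S^{(m)}=\{\alpha\in\mathbb N_0^d:|\alpha|=m\}$; for $A\in F^{(m)}$ and $\alpha\in S^{(m)}$, $A_\alpha:=A_{i_1\dots i_m}$ for any index with $\#\{r:i_r=k\}=\alpha_k$ for all $k$. For $\alpha\in\mathbb N_0^d$: $\alpha^{(l\pm)}_j=\alpha_j$ ($j\ne l$), $\alpha^{(l\pm)}_l=(\alpha_l\pm1)_+$. $v^{\otimes m}$ is the tensor with entries $v_{i_1}\cdots v_{i_m}$. The symmetric rank of $A\in F^{(m)}$ is the minimal $s$ such that $A=\sum_{k=1}^s\lambda_kv_k^{\otimes m}$ with real $\lambda_k$ and $v_k\in\mathbb R^d$ (such decompositions always exist). *)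

theory Defs
  imports "HOL-Analysis.Analysis" "HOL-Library.Multiset"
begin

text \<open>Dimension d is CARD('n); vectors are real^'n, matrices real^'n^'n.
  An m-tensor is represented as a function on index lists ('n::finite list),
  the entry A_{i_1...i_m} being A [i_1,...,i_m]; by convention it vanishes
  on lists of length different from m.\<close>

definition sym_tensor :: "nat \<Rightarrow> ('n::finite list \<Rightarrow> real) \<Rightarrow> bool" where
  "sym_tensor m A \<longleftrightarrow>
     (\<forall>xs. length xs \<noteq> m \<longrightarrow> A xs = 0) \<and>
     (\<forall>xs ys. length xs = m \<longrightarrow> length ys = m \<longrightarrow> mset xs = mset ys \<longrightarrow> A xs = A ys)"

definition tensor_pow :: "real^'n::finite \<Rightarrow> nat \<Rightarrow> ('n::finite list \<Rightarrow> real)" where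
  "tensor_pow v m = (\<lambda>xs. if length xs = m then prod_list (map (\<lambda>i. v $ i) xs) else 0)"

definition multi_indices :: "nat \<Rightarrow> ('n::finite \<Rightarrow> nat) set" where
  "multi_indices m = {\<alpha>. (\<Sum>k\<in>UNIV. \<alpha> k) = m}"

definition tensor_entry :: "('n::finite list \<Rightarrow> real) \<Rightarrow> ('n \<Rightarrow> nat) \<Rightarrow> real" where
  "tensor_entry A \<alpha> = A (SOME xs. \<forall>k. count (mset xs) k = \<alpha> k)"

definition idx_minus :: "('n::finite \<Rightarrow> nat) \<Rightarrow> 'n \<Rightarrow> ('n \<Rightarrow> nat)" where
  "idx_minus \<alpha> l = \<alpha>(l := \<alpha> l - 1)"

definition idx_plus :: "('n::finite \<Rightarrow> nat) \<Rightarrow> 'n \<Rightarrow> ('n \<Rightarrow> nat)" where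
  "idx_plus \<alpha> l = \<alpha>(l := \<alpha> l + 1)"

definition sym_rank :: "nat \<Rightarrow> ('n::finite list \<Rightarrow> real) \<Rightarrow> nat" where
  "sym_rank m A = (LEAST s. \<exists>(lam::nat \<Rightarrow> real) (v::nat \<Rightarrow> real^'n).
        A = (\<lambda>xs. \<Sum>k<s. lam k * tensor_pow (v k) m xs))"

definition sym_part :: "real^'n::finite^'n \<Rightarrow> real^'n^'n" where
  "sym_part C = (1/2) *\<^sub>R (C + transpose C)"

definition condition_A :: "real^'n::finite^'n \<Rightarrow> bool" where
  "condition_A C \<longleftrightarrow>
     (\<forall>x. x \<bullet> (sym_part C *v x) \<ge> 0) \<and>
     (\<forall>U. subspace U \<longrightarrow> U \<subseteq> {x. sym_part C *v x = 0} \<longrightarrow>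
          (\<forall>x\<in>U. transpose C *v x \<in> U) \<longrightarrow> U = {0})"

end

theory Submission
  imports Defs
begin


definition lst :: "('n::finite \<Rightarrow> nat) \<Rightarrow> 'n list" where
  "lst \<beta> = (SOME xs. \<forall>k. count (mset xs) k = \<beta> k)"

lemma tensor_entry_lst: "tensor_entry A \<beta> = A (lst \<beta>)"
  unfolding tensor_entry_def lst_def ..

lemma lst_ex: "\<exists>xs. \<forall>k. count (mset xs) k = (\<beta>::'n::finite \<Rightarrow> nat) k"
proof -
  obtain xs where xs: "mset xs = (\<Sum>k\<in>UNIV. replicate_mset (\<beta> k) k)" using ex_mset by blast
  show ?thesis by (rule exI[of _ xs]) (simp add: xs count_sum)
qed

lemma lst_count: "count (mset (lst \<beta>)) k = \<beta> k"
  unfolding lst_def using someI_ex[OF lst_ex[of \<beta>]] by blast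

lemma lst_mset: "mset (lst (count (mset xs))) = mset xs"
  by (rule multiset_eqI) (simp add: lst_count)

lemma length_count: "length xs = (\<Sum>k\<in>UNIV. count (mset (xs::'n::finite list)) k)"
  using sum_count_set[of xs UNIV] by (simp add: count_mset)

lemma length_lst: "length (lst \<beta>) = sum \<beta> UNIV"
  by (simp add: length_count[of "lst \<beta>"] lst_count)

definition monom_v :: "real^'n::finite \<Rightarrow> ('n \<Rightarrow> nat) \<Rightarrow> real" where
  "monom_v w \<beta> = (\<Prod>i\<in>UNIV. (w$i) ^ \<beta> i)"

lemma prod_list_monom: "prod_list (map (\<lambda>i. w$i) xs) = monom_v w (count (mset xs))"
proof (induction xs)
  case Nil
  then show ?case by (simp add: monom_v_def)
next
  case (Cons a xs)
  have "monom_v w (count (mset (a#xs))) = (\<Prod>i\<in>UNIV. (if i = a then w$i else 1) * w$i ^ count (mset xs) i)"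
    unfolding monom_v_def by (rule prod.cong) auto
  also have "\<dots> = w$a * monom_v w (count (mset xs))"
    by (simp add: prod.distrib monom_v_def)
  finally show ?case by (simp only: list.map(2) prod_list.Cons Cons.IH)
qed

lemma tensor_entry_pow: "tensor_entry (tensor_pow w m) \<beta> = (if sum \<beta> UNIV = m then monom_v w \<beta> else 0)"
proof -
  have "count (mset (lst \<beta>)) = \<beta>" by (rule ext) (simp add: lst_count)
  then show ?thesis
    unfolding tensor_entry_lst tensor_pow_def length_lst prod_list_monom by simp
qed

lemma tensor_entry_sum: "tensor_entry (\<lambda>xs. \<Sum>k<s. lam k * tensor_pow (u k) m xs) \<beta>
   = (\<Sum>k<s. lam k * (if sum \<beta> UNIV = m then monom_v (u k) \<beta> else 0))"
  unfolding tensor_entry_lst by (simp add: tensor_entry_pow[unfolded tensor_entry_lst])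

lemma tensor_sum_sym: "(\<Sum>k<s. lam k * tensor_pow (u k) m xs)
   = tensor_entry (\<lambda>xs. \<Sum>k<s. lam k * tensor_pow (u k) m xs) (count (mset xs))"
  by (subst tensor_entry_sum) (auto simp: tensor_pow_def prod_list_monom length_count[symmetric] intro!: sum.cong)

lemma sym_entry: "sym_tensor m A \<Longrightarrow> length xs = m \<Longrightarrow> A xs = tensor_entry A (count (mset xs))"
  unfolding tensor_entry_lst sym_tensor_def
  by (metis lst_mset size_mset)

lemma sym_zero: "sym_tensor m A \<Longrightarrow> sum \<beta> UNIV \<noteq> m \<Longrightarrow> tensor_entry A \<beta> = 0"
  unfolding tensor_entry_lst sym_tensor_def by (simp add: length_lst)

lemma sum_upd: "sum (f(x := y)) (UNIV::'n::finite set) + f x = sum f UNIV + (y::nat)"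
proof -
  have "sum (f(x := y)) UNIV = y + sum f (UNIV - {x})"
    by (simp add: sum.remove[of UNIV x])
  moreover have "sum f UNIV = f x + sum f (UNIV - {x})"
    by (simp add: sum.remove[of UNIV x])
  ultimately show ?thesis by simp
qed

lemma sum_idx: "\<beta> j \<ge> 1 \<Longrightarrow> sum (idx_plus (idx_minus \<beta> j) l) UNIV = sum \<beta> UNIV"
  unfolding idx_plus_def idx_minus_def
  using sum_upd[of "\<beta>(j := \<beta> j - 1)" l "(\<beta>(j := \<beta> j - 1)) l + 1"] sum_upd[of \<beta> j "\<beta> j - 1"]
  by (cases "l = j") auto

lemma monom_plus: "monom_v w (\<gamma>(l := \<gamma> l + 1)) = w$l * monom_v w \<gamma>"
proof -
  have "monom_v w (\<gamma>(l := \<gamma> l + 1)) = (\<Prod>i\<in>UNIV. (if i = l then w$i else 1) * w$i ^ \<gamma> i)"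
    unfolding monom_v_def by (rule prod.cong) auto
  also have "\<dots> = w$l * monom_v w \<gamma>"
    by (simp add: prod.distrib monom_v_def)
  finally show ?thesis .
qed

lemma monom_minus: "\<beta> j \<ge> 1 \<Longrightarrow> monom_v w \<beta> = w$j * monom_v w (idx_minus \<beta> j)"
  using monom_plus[of w "idx_minus \<beta> j" j] unfolding idx_minus_def
  by (metis Suc_diff_le diff_Suc_1 fun_upd_same fun_upd_triv fun_upd_upd add.commute plus_1_eq_Suc)

lemma monom_plus': "monom_v w (idx_plus \<gamma> l) = w$l * monom_v w \<gamma>"
  unfolding idx_plus_def by (rule monom_plus)



lemma monom_minus2: "monom_v w (idx_minus \<beta> i) = (w$i)^(\<beta> i - 1) * (\<Prod>j\<in>UNIV-{i}. (w$j)^\<beta> j)"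
proof -
  have "monom_v w (idx_minus \<beta> i) = (w$i)^(\<beta> i - 1) * (\<Prod>j\<in>UNIV-{i}. (w$j)^(idx_minus \<beta> i j))"
    unfolding monom_v_def by (simp add: prod.remove[of UNIV i] idx_minus_def)
  also have "(\<Prod>j\<in>UNIV-{i}. (w$j)^(idx_minus \<beta> i j)) = (\<Prod>j\<in>UNIV-{i}. (w$j)^\<beta> j)"
    by (rule prod.cong) (auto simp: idx_minus_def)
  finally show ?thesis .
qed

lemma monom_deriv:
  fixes w :: "real \<Rightarrow> real^'n::finite"
  assumes "(w has_vector_derivative w') (at t within S)"
  shows "((\<lambda>\<tau>. monom_v (w \<tau>) \<beta>) has_real_derivative
     (\<Sum>j\<in>UNIV. real (\<beta> j) * w'$j * monom_v (w t) (idx_minus \<beta> j))) (at t within S)"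
proof -
  have comp: "((\<lambda>\<tau>. w \<tau> $ i) has_real_derivative w'$i) (at t within S)" for i
    using bounded_linear.has_vector_derivative[OF bounded_linear_vec_nth assms]
    by (simp add: has_real_derivative_iff_has_vector_derivative)
  define d where "d i = real (\<beta> i) * (w'$i * (w t $ i)^(\<beta> i - Suc 0))" for i
  have pw: "((\<lambda>\<tau>. (w \<tau> $ i)^\<beta> i) has_real_derivative d i) (at t within S)" for i
    unfolding d_def by (rule DERIV_power[OF comp])
  have "((\<lambda>\<tau>. \<Prod>i\<in>UNIV. (w \<tau> $ i)^\<beta> i) has_derivative
      (\<lambda>y. \<Sum>i\<in>UNIV. (d i * y) * (\<Prod>j\<in>UNIV-{i}. (w t $ j)^\<beta> j))) (at t within S)"
    by (rule has_derivative_prod) (use pw in \<open>auto simp: has_field_derivative_def\<close>)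
  then have "((\<lambda>\<tau>. \<Prod>i\<in>UNIV. (w \<tau> $ i)^\<beta> i) has_real_derivative
      (\<Sum>i\<in>UNIV. d i * (\<Prod>j\<in>UNIV-{i}. (w t $ j)^\<beta> j))) (at t within S)"
    by (rule has_derivative_imp_has_field_derivative) (simp add: sum_distrib_left mult_ac)
  moreover have "d i * (\<Prod>j\<in>UNIV-{i}. (w t $ j)^\<beta> j) = real (\<beta> i) * w'$i * monom_v (w t) (idx_minus \<beta> i)" for i
    unfolding d_def monom_minus2 by simp
  ultimately show ?thesis unfolding monom_v_def by simp
qed

lemma E_ode:
  fixes C :: "real^'n::finite^'n" and u :: "nat \<Rightarrow> real \<Rightarrow> real^'n"
  assumes der: "\<And>k. k < s \<Longrightarrow> (u k has_vector_derivative (- (C *v u k t))) (at t within S)"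
     and sm: "sum \<beta> UNIV = m"
  shows "((\<lambda>\<tau>. tensor_entry (\<lambda>xs. \<Sum>k<s. lam k * tensor_pow (u k \<tau>) m xs) \<beta>) has_real_derivative
     (- (\<Sum>j\<in>UNIV. \<Sum>l\<in>UNIV. real (\<beta> j) * C$j$l *
          tensor_entry (\<lambda>xs. \<Sum>k<s. lam k * tensor_pow (u k t) m xs) (idx_plus (idx_minus \<beta> j) l))))
     (at t within S)"
proof -
  have "((\<lambda>\<tau>. \<Sum>k<s. lam k * monom_v (u k \<tau>) \<beta>) has_real_derivative
     (\<Sum>k<s. lam k * (\<Sum>j\<in>UNIV. real (\<beta> j) * (- (C *v u k t))$j * monom_v (u k t) (idx_minus \<beta> j))))
     (at t within S)"
    by (intro DERIV_sum DERIV_cmult monom_deriv der) simp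
  moreover have eq1: "(\<Sum>l\<in>UNIV. real (\<beta> j) * C$j$l *
          tensor_entry (\<lambda>xs. \<Sum>k<s. lam k * tensor_pow (u k t) m xs) (idx_plus (idx_minus \<beta> j) l))
     = (\<Sum>k<s. lam k * (real (\<beta> j) * (C *v u k t)$j * monom_v (u k t) (idx_minus \<beta> j)))" for j
  proof (cases "\<beta> j = 0")
    case True
    then show ?thesis by simp
  next
    case False
    then have "\<beta> j \<ge> 1" by simp
    then have "(\<Sum>l\<in>UNIV. real (\<beta> j) * C$j$l *
          tensor_entry (\<lambda>xs. \<Sum>k<s. lam k * tensor_pow (u k t) m xs) (idx_plus (idx_minus \<beta> j) l))
       = (\<Sum>l\<in>UNIV. \<Sum>k<s. lam k * (real (\<beta> j) * (C$j$l * u k t $ l) * monom_v (u k t) (idx_minus \<beta> j)))"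
      by (simp add: tensor_entry_sum sum_idx sm monom_plus' sum_distrib_left mult_ac)
    also have "\<dots> = (\<Sum>k<s. \<Sum>l\<in>UNIV. lam k * (real (\<beta> j) * (C$j$l * u k t $ l) * monom_v (u k t) (idx_minus \<beta> j)))"
      by (rule sum.swap)
    also have "\<dots> = (\<Sum>k<s. lam k * (real (\<beta> j) * (C *v u k t)$j * monom_v (u k t) (idx_minus \<beta> j)))"
      by (simp add: matrix_vector_mult_def sum_distrib_left sum_distrib_right mult_ac)
    finally show ?thesis .
  qed
  moreover have "(\<Sum>k<s. lam k * (\<Sum>j\<in>UNIV. real (\<beta> j) * (- (C *v u k t))$j * monom_v (u k t) (idx_minus \<beta> j)))
     = - (\<Sum>j\<in>UNIV. \<Sum>k<s. lam k * (real (\<beta> j) * (C *v u k t)$j * monom_v (u k t) (idx_minus \<beta> j)))"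
    by (subst sum.swap) (simp add: sum_distrib_left sum_negf mult_ac)
  ultimately show ?thesis
    by (simp add: tensor_entry_sum sm)
qed



typedef (overloaded) 'n endo = "UNIV :: ((real^'n::finite) \<Rightarrow>\<^sub>L (real^'n)) set"
  morphisms Rep_endo Abs_endo by auto

setup_lifting type_definition_endo

instantiation endo :: (finite) real_normed_vector
begin
lift_definition norm_endo :: "'a endo \<Rightarrow> real" is norm .
lift_definition minus_endo :: "'a endo \<Rightarrow> 'a endo \<Rightarrow> 'a endo" is "(-)" .
lift_definition plus_endo :: "'a endo \<Rightarrow> 'a endo \<Rightarrow> 'a endo" is "(+)" .
lift_definition uminus_endo :: "'a endo \<Rightarrow> 'a endo" is "uminus" .
lift_definition zero_endo :: "'a endo" is "0" .
lift_definition scaleR_endo :: "real \<Rightarrow> 'a endo \<Rightarrow> 'a endo" is "scaleR" .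
definition dist_endo :: "'a endo \<Rightarrow> 'a endo \<Rightarrow> real" where "dist_endo a b = norm (a - b)"
definition sgn_endo :: "'a endo \<Rightarrow> 'a endo" where "sgn_endo x = scaleR (inverse (norm x)) x"
definition uniformity_endo :: "('a endo \<times> 'a endo) filter" where
  "uniformity_endo = (INF e\<in>{0 <..}. principal {(x, y). dist x y < e})"
definition open_endo :: "'a endo set \<Rightarrow> bool"
  where "open_endo S = (\<forall>x\<in>S. \<forall>\<^sub>F (x', y) in uniformity. x' = x \<longrightarrow> y \<in> S)"
instance
  apply standard
  unfolding dist_endo_def open_endo_def sgn_endo_def uniformity_endo_def
  apply (rule refl | (transfer, force simp: norm_triangle_ineq algebra_simps))+
  done
end

instantiation endo :: (finite) real_normed_algebra_1
begin
lift_definition one_endo :: "'a endo" is "id_blinfun" .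
lift_definition times_endo :: "'a endo \<Rightarrow> 'a endo \<Rightarrow> 'a endo" is "blinfun_compose" .
instance
  apply standard
  apply (transfer; rule blinfun_eqI; simp add: blinfun.bilinear_simps)+
    apply transfer
    apply (metis blinfun.zero_left blinfun_apply_id_blinfun zero_neq_one)
   apply transfer apply (rule norm_blinfun_compose)
  apply transfer apply simp
  done
end

instance endo :: (finite) banach
proof
  fix X :: "nat \<Rightarrow> 'a endo"
  assume "Cauchy X"
  have dist_eq: "dist a b = dist (Rep_endo a) (Rep_endo b)" for a b :: "'a endo"
    unfolding dist_endo_def dist_norm by transfer simp
  have "Cauchy (\<lambda>n. Rep_endo (X n))"
    using \<open>Cauchy X\<close> unfolding Cauchy_def dist_eq .
  then obtain L where L: "(\<lambda>n. Rep_endo (X n)) \<longlonglongrightarrow> L"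
    using convergent_eq_Cauchy convergent_def by blast
  have "X \<longlonglongrightarrow> Abs_endo L"
    using L unfolding lim_sequentially dist_eq by (simp add: Abs_endo_inverse)
  then show "convergent X" by (auto simp: convergent_def)
qed


definition app :: "'n::finite endo \<Rightarrow> real^'n \<Rightarrow> real^'n" where
  "app A x = blinfun_apply (Rep_endo A) x"

lemma bl_Rep: "bounded_linear (Rep_endo :: 'n::finite endo \<Rightarrow> _)"
proof
  show "Rep_endo (x + y) = Rep_endo x + Rep_endo y" for x y :: "'n endo" by (simp add: plus_endo.rep_eq)
  show "Rep_endo (r *\<^sub>R x) = r *\<^sub>R Rep_endo x" for r and x :: "'n endo" by (simp add: scaleR_endo.rep_eq)
  show "\<exists>K. \<forall>x::'n endo. norm (Rep_endo x) \<le> norm x * K"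
    by (rule exI[of _ 1]) (simp add: norm_endo.rep_eq)
qed

lemma bb_app: "bounded_bilinear app"
  unfolding app_def by (rule bounded_bilinear.comp1[OF bounded_bilinear_blinfun_apply bl_Rep])

lemma app_mult: "app (A * B) x = app A (app B x)"
  unfolding app_def by (simp add: times_endo.rep_eq)

lemma app_one: "app 1 x = x"
  unfolding app_def by (simp add: one_endo.rep_eq)

definition cb :: "real^'n::finite^'n \<Rightarrow> 'n endo" where
  "cb C = Abs_endo (Blinfun (\<lambda>x. C *v x))"

lemma app_cb: "app (cb C) x = C *v x"
  unfolding app_def cb_def by (simp add: Abs_endo_inverse bounded_linear_Blinfun_apply)

lemma flow_back:
  fixes C :: "real^'n::finite^'n" and w :: "real \<Rightarrow> real^'n"
  assumes der: "\<And>\<tau>. \<tau> \<ge> 0 \<Longrightarrow> (w has_vector_derivative (- (C *v w \<tau>))) (at \<tau> within {0..})"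
    and t: "t \<ge> 0"
  shows "app (exp (t *\<^sub>R cb C)) (w t) = w 0"
proof -
  have D: "((\<lambda>\<tau>. app (exp (\<tau> *\<^sub>R cb C)) (w \<tau>)) has_vector_derivative 0) (at \<tau> within {0..})"
    if "\<tau> \<in> {0..}" for \<tau>
  proof -
    have "((\<lambda>\<tau>. app (exp (\<tau> *\<^sub>R cb C)) (w \<tau>)) has_vector_derivative
        (app (exp (\<tau> *\<^sub>R cb C)) (- (C *v w \<tau>)) + app (exp (\<tau> *\<^sub>R cb C) * cb C) (w \<tau>))) (at \<tau> within {0..})"
      by (rule bounded_bilinear.has_vector_derivative[OF bb_app exp_scaleR_has_vector_derivative_right der])
        (use that in auto)
    moreover have "app (exp (\<tau> *\<^sub>R cb C)) (- (C *v w \<tau>)) + app (exp (\<tau> *\<^sub>R cb C) * cb C) (w \<tau>) = 0"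
      by (simp add: app_mult app_cb bounded_bilinear.minus_right[OF bb_app])
    ultimately show ?thesis by simp
  qed
  have cvx: "convex {0::real..}" by (simp add: convex_real_interval)
  obtain c where c: "\<And>x. x \<in> {0..} \<Longrightarrow> app (exp (x *\<^sub>R cb C)) (w x) = c"
    by (rule has_vector_derivative_zero_constant[OF cvx D], simp, rule that, assumption)
  from c[of t] c[of 0] show ?thesis using t by (simp add: app_one)
qed

lemma bl_app: "bounded_linear (app A)"
  by (rule bounded_bilinear.bounded_linear_right[OF bb_app])

lemma ml:
  fixes u z :: "nat \<Rightarrow> real^'n::finite"
  assumes "\<forall>xs. length xs = length rs \<longrightarrow> (\<Sum>k<K1. a k * prod_list (map (\<lambda>i. u k $ i) xs))
              = (\<Sum>k<K2. b k * prod_list (map (\<lambda>i. z k $ i) xs))"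
  shows "(\<Sum>k<K1. a k * prod_list (map (\<lambda>r. r \<bullet> u k) rs))
       = (\<Sum>k<K2. b k * prod_list (map (\<lambda>r. r \<bullet> z k) rs))"
  using assms
proof (induction rs arbitrary: a b)
  case Nil
  then show ?case by simp
next
  case (Cons r rs)
  have IH: "(\<Sum>k<K1. (a k * u k $ i) * prod_list (map (\<lambda>r. r \<bullet> u k) rs))
       = (\<Sum>k<K2. (b k * z k $ i) * prod_list (map (\<lambda>r. r \<bullet> z k) rs))" for i
  proof (rule Cons.IH, intro allI impI)
    fix xs :: "'n list" assume "length xs = length rs"
    then show "(\<Sum>k<K1. (a k * u k $ i) * prod_list (map (\<lambda>i. u k $ i) xs))
       = (\<Sum>k<K2. (b k * z k $ i) * prod_list (map (\<lambda>i. z k $ i) xs))"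
      using Cons.prems[rule_format, of "i # xs"] by (simp add: mult_ac)
  qed
  have eq: "(\<Sum>k<K. c k * prod_list (map (\<lambda>r. r \<bullet> y k) (r#rs)))
     = (\<Sum>i\<in>UNIV. r$i * (\<Sum>k<K. (c k * y k $ i) * prod_list (map (\<lambda>r. r \<bullet> y k) rs)))"
    for K c and y :: "nat \<Rightarrow> real^'n"
  proof -
    have "(\<Sum>k<K. c k * prod_list (map (\<lambda>r. r \<bullet> y k) (r#rs)))
       = (\<Sum>k<K. \<Sum>i\<in>UNIV. r$i * ((c k * y k $ i) * prod_list (map (\<lambda>r. r \<bullet> y k) rs)))"
      by (simp add: inner_vec_def sum_distrib_left sum_distrib_right mult_ac)
    also have "\<dots> = (\<Sum>i\<in>UNIV. \<Sum>k<K. r$i * ((c k * y k $ i) * prod_list (map (\<lambda>r. r \<bullet> y k) rs)))"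
      by (rule sum.swap)
    finally show ?thesis by (simp add: sum_distrib_left)
  qed
  show ?case unfolding eq IH ..
qed



lemma key_ineq:
  fixes a b c g :: real
  assumes "a^2 \<le> g" "b^2 \<le> g"
  shows "- (2 * c * a * b) \<le> 2 * \<bar>c\<bar> * g"
proof -
  have "0 \<le> (\<bar>a\<bar> - \<bar>b\<bar>)^2" by simp
  then have "2 * \<bar>a\<bar> * \<bar>b\<bar> \<le> a^2 + b^2"
    by (simp add: power2_eq_square algebra_simps abs_mult_self_eq)
  then have ab: "\<bar>a * b\<bar> \<le> g" using assms by (simp add: abs_mult)
  have "- (2 * c * a * b) \<le> \<bar>2 * c * a * b\<bar>" by simp
  also have "\<dots> = 2 * \<bar>c\<bar> * \<bar>a * b\<bar>" by (simp add: abs_mult)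
  also have "\<dots> \<le> 2 * \<bar>c\<bar> * g" using ab by (simp add: mult_left_mono)
  finally show ?thesis .
qed

lemma row_app: "matrix (app A) $ i \<bullet> u = app A u $ i"
proof -
  have "app A u = matrix (app A) *v u"
    using matrix_vector_mul(3)[OF bl_app, of A] by metis
  then show ?thesis by (simp add: matrix_vector_mul_component)
qed

theorem theorem5p19:
  fixes C :: "real^'n^'n" and m s :: nat
    and lam :: "nat \<Rightarrow> real" and v :: "nat \<Rightarrow> real^'n"
    and D0 :: "'n list \<Rightarrow> real"
    and D :: "real \<Rightarrow> 'n list \<Rightarrow> real"
    and vt :: "nat \<Rightarrow> real \<Rightarrow> real^'n"
  assumes condA: "condition_A C"
    and m_pos: "m \<ge> 1"
    and D0_sym: "sym_tensor m D0"
    and D0_decomp: "D0 = (\<lambda>xs. \<Sum>k<s. lam k * tensor_pow (v k) m xs)"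
    and s_rank: "s = sym_rank m D0"
    and D_sym: "\<And>t. t \<ge> 0 \<Longrightarrow> sym_tensor m (D t)"
    and D_init: "D 0 = D0"
    and D_ode: "\<And>\<alpha> t. \<alpha> \<in> multi_indices m \<Longrightarrow> t \<ge> 0 \<Longrightarrow>
        ((\<lambda>\<tau>. tensor_entry (D \<tau>) \<alpha>) has_real_derivative
          (- (\<Sum>j\<in>UNIV. \<Sum>l\<in>UNIV. real (\<alpha> j) * C $ j $ l *
                 tensor_entry (D t) (idx_plus (idx_minus \<alpha> j) l))))
        (at t within {0..})"
    and vt_ode: "\<And>k t. k < s \<Longrightarrow> t \<ge> 0 \<Longrightarrow>
        (vt k has_vector_derivative (- (C *v vt k t))) (at t within {0..})"
    and vt_init: "\<And>k. k < s \<Longrightarrow> vt k 0 = v k"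
  shows "\<forall>t>0. D t = (\<lambda>xs. \<Sum>k<s. lam k * tensor_pow (vt k t) m xs)
               \<and> sym_rank m (D t) = s"
proof -
  define E where "E t = (\<lambda>xs. \<Sum>k<s. lam k * tensor_pow (vt k t) m xs)" for t
  define S where "S = (multi_indices m :: ('n \<Rightarrow> nat) set)"
  have S_iff: "\<beta> \<in> S \<longleftrightarrow> sum \<beta> UNIV = m" for \<beta>
    unfolding S_def multi_indices_def by simp
  have finS: "finite S"
  proof -
    have "S \<subseteq> Pi UNIV (\<lambda>_. {..m})"
    proof
      fix \<beta> assume "\<beta> \<in> S"
      then have "\<beta> k \<le> m" for k
        using member_le_sum[of k UNIV \<beta>] by (simp add: S_iff)
      then show "\<beta> \<in> Pi UNIV (\<lambda>_. {..m})" by auto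
    qed
    moreover have "finite (Pi UNIV (\<lambda>_::'n. {..m}))"
      using finite_PiE[of UNIV "\<lambda>_::'n. {..m}"] by (simp add: PiE_UNIV_domain)
    ultimately show ?thesis using finite_subset by blast
  qed
  define F where "F t \<beta> = tensor_entry (D t) \<beta> - tensor_entry (E t) \<beta>" for t \<beta>
  define R where "R t \<beta> = (\<Sum>j\<in>UNIV. \<Sum>l\<in>UNIV. real (\<beta> j) * C$j$l * F t (idx_plus (idx_minus \<beta> j) l))" for t \<beta>
  have F_ode: "((\<lambda>\<tau>. F \<tau> \<beta>) has_real_derivative (- R t \<beta>)) (at t within {0..})"
    if "\<beta> \<in> S" "t \<ge> 0" for \<beta> t
  proof -
    have e: "((\<lambda>\<tau>. tensor_entry (E \<tau>) \<beta>) has_real_derivative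
       (- (\<Sum>j\<in>UNIV. \<Sum>l\<in>UNIV. real (\<beta> j) * C$j$l * tensor_entry (E t) (idx_plus (idx_minus \<beta> j) l))))
       (at t within {0..})"
      unfolding E_def by (rule E_ode) (use vt_ode that S_iff in auto)
    have d: "((\<lambda>\<tau>. tensor_entry (D \<tau>) \<beta>) has_real_derivative
       (- (\<Sum>j\<in>UNIV. \<Sum>l\<in>UNIV. real (\<beta> j) * C$j$l * tensor_entry (D t) (idx_plus (idx_minus \<beta> j) l))))
       (at t within {0..})"
      using D_ode that unfolding S_def by blast
    show ?thesis
      unfolding F_def R_def
      by (rule DERIV_cong[OF DERIV_diff[OF d e]]) (simp add: sum_subtractf[symmetric] right_diff_distrib flip: sum_negf)
  qed
  define g where "g t = (\<Sum>\<beta>\<in>S. (F t \<beta>)^2)" for t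
  define K where "K = (\<Sum>\<beta>\<in>S. \<Sum>j\<in>UNIV. \<Sum>l\<in>UNIV. 2 * \<bar>real (\<beta> j) * C$j$l\<bar>)"
  have g_nonneg: "g t \<ge> 0" for t
    unfolding g_def by (rule sum_nonneg) simp
  have F_le: "(F t \<gamma>)^2 \<le> g t" if "t \<ge> 0" for t \<gamma>
  proof (cases "sum \<gamma> UNIV = m")
    case True
    then have "\<gamma> \<in> S" by (simp add: S_iff)
    then show ?thesis unfolding g_def
      by (rule member_le_sum) (auto simp: finS)
  next
    case False
    have "tensor_entry (D t) \<gamma> = 0" by (rule sym_zero[OF D_sym[OF that] False])
    moreover have "tensor_entry (E t) \<gamma> = 0" unfolding E_def tensor_entry_sum using False by simp
    ultimately show ?thesis using g_nonneg by (simp add: F_def)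
  qed
  define g' where "g' t = (\<Sum>\<beta>\<in>S. 2 * F t \<beta> * (- R t \<beta>))" for t
  have g_der: "(g has_real_derivative g' t) (at t within {0..})" if "t \<ge> 0" for t
  proof -
    have "((\<lambda>\<tau>. (F \<tau> \<beta>)^2) has_real_derivative 2 * F t \<beta> * (- R t \<beta>)) (at t within {0..})"
      if "\<beta> \<in> S" for \<beta>
      by (rule DERIV_cong[OF DERIV_power[OF F_ode[OF that \<open>t \<ge> 0\<close>]]]) simp
    then have "((\<lambda>\<tau>. \<Sum>\<beta>\<in>S. (F \<tau> \<beta>)^2) has_real_derivative g' t) (at t within {0..})"
      unfolding g'_def by (rule DERIV_sum)
    then show ?thesis unfolding g_def[abs_def] .
  qed
  have g'_le: "g' t \<le> K * g t" if "t \<ge> 0" for t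
  proof -
    have "g' t = (\<Sum>\<beta>\<in>S. \<Sum>j\<in>UNIV. \<Sum>l\<in>UNIV. - (2 * (real (\<beta> j) * C$j$l) * F t \<beta> * F t (idx_plus (idx_minus \<beta> j) l)))"
      unfolding g'_def R_def by (simp add: sum_distrib_left sum_negf mult_ac)
    also have "\<dots> \<le> (\<Sum>\<beta>\<in>S. \<Sum>j\<in>UNIV. \<Sum>l\<in>UNIV. 2 * \<bar>real (\<beta> j) * C$j$l\<bar> * g t)"
      by (intro sum_mono key_ineq F_le that)
    also have "\<dots> = K * g t" unfolding K_def by (simp add: sum_distrib_right)
    finally show ?thesis .
  qed
  define h where "h t = g t * exp (- K * t)" for t
  have h_der: "(h has_real_derivative (g' t * exp (- K * t) - K * g t * exp (- K * t))) (at t within {0..})"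
    if "t \<ge> 0" for t
    unfolding h_def[abs_def]
    by (rule DERIV_cong[OF DERIV_mult[OF g_der[OF that] DERIV_chain2[OF DERIV_exp DERIV_cmult[OF DERIV_ident]]]])
       (simp add: algebra_simps)
  have E0: "E 0 = D0"
    unfolding E_def D0_decomp by (rule ext, rule sum.cong) (auto simp: vt_init)
  have h0: "h 0 = 0"
    unfolding h_def g_def F_def by (simp add: E0 D_init)
  have DE: "D t = E t" if "t > 0" for t
  proof -
    have "h t \<le> h 0"
    proof (rule DERIV_nonpos_imp_decreasing_open[of 0 t h])
      show "0 \<le> t" using that by simp
    next
      fix x :: real assume x: "0 < x" "x < t"
      have "(h has_real_derivative (g' x * exp (- K * x) - K * g x * exp (- K * x))) (at x within {0<..})"
        by (rule DERIV_subset[OF h_der]) (use x in auto)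
      then have "(h has_real_derivative (g' x * exp (- K * x) - K * g x * exp (- K * x))) (at x)"
        using at_within_open[of x "{0<..}"] x by simp
      moreover have "g' x * exp (- K * x) - K * g x * exp (- K * x) \<le> 0"
        using g'_le[of x] x by (simp add: left_diff_distrib[symmetric] mult_nonpos_nonneg)
      ultimately show "\<exists>y. (h has_real_derivative y) (at x) \<and> y \<le> 0" by blast
    next
      show "continuous_on {0..t} h"
        unfolding continuous_on_eq_continuous_within
      proof
        fix x assume "x \<in> {0..t}"
        then have "continuous (at x within {0..}) h"
          using DERIV_continuous[OF h_der] by auto
        then show "continuous (at x within {0..t}) h"
          by (rule continuous_within_subset) auto
      qed
    qed
    then have "h t \<le> 0" by (simp add: h0)
    then have "g t \<le> 0" unfolding h_def by (simp add: mult_le_0_iff)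
    then have gt: "g t = 0" using g_nonneg[of t] by simp
    have F0: "F t \<beta> = 0" if "\<beta> \<in> S" for \<beta>
      using gt that finS unfolding g_def by (simp add: sum_nonneg_eq_0_iff)
    show ?thesis
    proof
      fix xs :: "'n list"
      show "D t xs = E t xs"
      proof (cases "length xs = m")
        case True
        have "count (mset xs) \<in> S" using True by (simp add: S_iff length_count[of xs])
        then have "tensor_entry (D t) (count (mset xs)) = tensor_entry (E t) (count (mset xs))"
          using F0 unfolding F_def by simp
        moreover have "D t xs = tensor_entry (D t) (count (mset xs))"
          by (rule sym_entry[OF D_sym True]) (use that in simp)
        moreover have "E t xs = tensor_entry (E t) (count (mset xs))"
          unfolding E_def by (rule tensor_sum_sym)
        ultimately show ?thesis by simp
      next
        case False
        then show ?thesis using D_sym[of t] that unfolding E_def sym_tensor_def tensor_pow_def by simp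
      qed
    qed
  qed
  show ?thesis
  proof (intro allI impI conjI)
    fix t :: real assume t: "t > 0"
    show "D t = (\<lambda>xs. \<Sum>k<s. lam k * tensor_pow (vt k t) m xs)"
      using DE[OF t] unfolding E_def .
    show "sym_rank m (D t) = s"
      unfolding sym_rank_def
    proof (rule Least_equality)
      show "\<exists>(lam::nat \<Rightarrow> real) (v::nat \<Rightarrow> real^'n). D t = (\<lambda>xs. \<Sum>k<s. lam k * tensor_pow (v k) m xs)"
        using DE[OF t] unfolding E_def by (intro exI[of _ lam] exI[of _ "\<lambda>k. vt k t"])
    next
      fix y assume "\<exists>(lam::nat \<Rightarrow> real) (v::nat \<Rightarrow> real^'n). D t = (\<lambda>xs. \<Sum>k<y. lam k * tensor_pow (v k) m xs)"
      then obtain mu :: "nat \<Rightarrow> real" and w :: "nat \<Rightarrow> real^'n"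
        where w: "D t = (\<lambda>xs. \<Sum>k<y. mu k * tensor_pow (w k) m xs)" by blast
      define N where "N = exp (t *\<^sub>R cb C)"
      define NN where "NN = matrix (app N)"
      have backN: "app N (vt k t) = v k" if "k < s" for k
        unfolding N_def using flow_back[of "vt k" C t] vt_ode[OF that] vt_init[OF that] t by simp
      have hyp: "\<forall>xs. length xs = length (map (\<lambda>i. NN $ i) zs) \<longrightarrow>
          (\<Sum>k<s. lam k * prod_list (map (\<lambda>i. vt k t $ i) xs))
          = (\<Sum>k<y. mu k * prod_list (map (\<lambda>i. w k $ i) xs))" if "length zs = m" for zs
      proof (intro allI impI)
        fix xs :: "'n list" assume "length xs = length (map (\<lambda>i. NN $ i) zs)"
        then have lx: "length xs = m" using that by simp
        have "E t xs = D t xs" using DE[OF t] by simp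
        then show "(\<Sum>k<s. lam k * prod_list (map (\<lambda>i. vt k t $ i) xs))
          = (\<Sum>k<y. mu k * prod_list (map (\<lambda>i. w k $ i) xs))"
          unfolding E_def w tensor_pow_def using lx by simp
      qed
      have rowN: "(\<lambda>r. r \<bullet> u) \<circ> (\<lambda>i. NN $ i) = (\<lambda>i. app N u $ i)" for u
        unfolding NN_def by (rule ext) (simp add: row_app)
      have "D0 = (\<lambda>xs. \<Sum>k<y. mu k * tensor_pow (app N (w k)) m xs)"
      proof
        fix xs :: "'n list"
        show "D0 xs = (\<Sum>k<y. mu k * tensor_pow (app N (w k)) m xs)"
        proof (cases "length xs = m")
          case True
          have "(\<Sum>k<s. lam k * prod_list (map (\<lambda>r. r \<bullet> vt k t) (map (\<lambda>i. NN $ i) xs)))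
              = (\<Sum>k<y. mu k * prod_list (map (\<lambda>r. r \<bullet> w k) (map (\<lambda>i. NN $ i) xs)))"
            by (rule ml[OF hyp[OF True]])
          then have "(\<Sum>k<s. lam k * prod_list (map (\<lambda>i. app N (vt k t) $ i) xs))
              = (\<Sum>k<y. mu k * prod_list (map (\<lambda>i. app N (w k) $ i) xs))"
            by (simp add: rowN)
          moreover have "(\<Sum>k<s. lam k * prod_list (map (\<lambda>i. app N (vt k t) $ i) xs))
              = (\<Sum>k<s. lam k * prod_list (map (\<lambda>i. v k $ i) xs))"
            by (rule sum.cong) (simp_all add: backN)
          ultimately show ?thesis
            unfolding D0_decomp tensor_pow_def using True by simp
        next
          case False
          then show ?thesis unfolding D0_decomp tensor_pow_def by simp
        qed
      qed
      then have "\<exists>(lam::nat \<Rightarrow> real) (v::nat \<Rightarrow> real^'n). D0 = (\<lambda>xs. \<Sum>k<y. lam k * tensor_pow (v k) m xs)"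
        by (intro exI[of _ mu] exI[of _ "\<lambda>k. app N (w k)"])
      then show "s \<le> y"
        unfolding s_rank sym_rank_def by (rule Least_le)
    qed
  qed
qed

end
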